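(* Let $d\ge1$ and $T>0$. Let $v_\textup{d}:\mathbb{R}^d\to\mathbb{R}^d$ be Lipschitz continuous and let $\mathcal{K}:\mathbb{R}^d\to\mathbb{R}^d$ be Lipschitz continuous and compactly supported in $B_R(0)$. Fix $\alpha,\beta\in\mathbb{R}$ with $\alpha+\beta\ge1$ and, for each $N\ge1$, use the interaction kernel $K^N_{\alpha,\beta}(z)=N^{-\alpha}\mathcal{K}(z/N^\beta)$. For each $N\ge1$ let $\bar X^{1},\dots,\bar X^{N}\in\mathbb{R}^d$ (depending on $N$) be distinct points, $\bar\epsilon^N=\sum_{i=1}^N\delta_{\bar X^i}$, let $f:\mathbb{R}^d\to\mathbb{R}$ be nonnegative with $\operatorname{supp}f\subseteq\overline{B_1(0)}$ and $\int_{B_1(0)}f=1$, let $r=r_N>0$ satisfy $r_N<\frac12\min_{i\ne j}|\bar X^j-\bar X^i|$, and let $\bar\rho^N$ be the measure with density $\sum_{i=1}^Nr_N^{-d}f((x-\bar X^i)/r_N)$. Let $\epsilon^N_\cdot,\rho^N_\cdot\in C([0,T];\mathcal{M}^N_1(\mathbb{R}^d))$ be the solutions of the Cauchy problem with interaction kernel $K^N_{\alpha,\beta}$ and initial data $\bar\epsilon^N$ and $\bar\rho^N$ respectively. If $r_N=o(N^{-1})$ as $N\to\infty$, then \[ \lim_{N\to\infty}W_1(\epsilon^N_t,\rho^N_t)=0\qquad\forall\,t\in(0,T]. \]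
   Context: $\mathcal{M}^N_1(\mathbb{R}^d)$ is the set of positive Borel measures on $\mathbb{R}^d$ with total mass $N$ and finite first moment. For $\mu,\nu\in\mathcal{M}^N_1(\mathbb{R}^d)$, $W_1(\mu,\nu)=\inf_{\pi\in\Pi(\mu,\nu)}\int|x-y|\,d\pi(x,y)$, where $\Pi(\mu,\nu)$ is the set of measures on $\mathbb{R}^d\times\mathbb{R}^d$ with marginals $\mu$ and $\nu$. With interaction kernel $K$, the velocity is $v[\mu](x)=v_\textup{d}(x)-\int K(y-x)\,d\mu(y)$. A solution of the Cauchy problem $\partial_t\mu_t+\nabla\cdot(\mu_tv[\mu_t])=0$, $\mu_0=\bar\mu$, on $[0,T]$ is a curve $\mu_\cdot\in C([0,T];\mathcal{M}^N_1(\mathbb{R}^d))$ (weak solution) given by $\mu_t=\gamma_t\#\bar\mu$ (push-forward), where the flow map satisfies $\gamma_t(x)=x+\int_0^tv[\mu_s](\gamma_s(x))\,ds$. *)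

theory Defs
  imports "HOL-Probability.Probability" "HOL-Library.Landau_Symbols"
begin

definition M1 :: "real \<Rightarrow> ('a::euclidean_space) measure \<Rightarrow> bool" where
  "M1 N \<mu> \<longleftrightarrow> sets \<mu> = sets borel \<and> emeasure \<mu> (space \<mu>) = ennreal N
      \<and> (\<integral>\<^sup>+ x. ennreal (norm x) \<partial>\<mu>) < \<infinity>"

definition couplings :: "('a::euclidean_space) measure \<Rightarrow> 'a measure \<Rightarrow> ('a \<times> 'a) measure set" where
  "couplings \<mu> \<nu> = {\<pi>. sets \<pi> = sets borel \<and> distr \<pi> borel fst = \<mu> \<and> distr \<pi> borel snd = \<nu>}"

definition W1 :: "('a::euclidean_space) measure \<Rightarrow> 'a measure \<Rightarrow> ennreal" where
  "W1 \<mu> \<nu> = (INF \<pi>\<in>couplings \<mu> \<nu>. \<integral>\<^sup>+ p. ennreal (norm (fst p - snd p)) \<partial>\<pi>)"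

definition vel :: "('a::euclidean_space \<Rightarrow> 'a) \<Rightarrow> ('a \<Rightarrow> 'a) \<Rightarrow> 'a measure \<Rightarrow> 'a \<Rightarrow> 'a" where
  "vel K vd \<mu> x = vd x - (\<integral> y. K (y - x) \<partial>\<mu>)"

definition is_solution :: "('a::euclidean_space \<Rightarrow> 'a) \<Rightarrow> ('a \<Rightarrow> 'a) \<Rightarrow> real \<Rightarrow> real
    \<Rightarrow> 'a measure \<Rightarrow> (real \<Rightarrow> 'a measure) \<Rightarrow> bool" where
  "is_solution K vd T N \<mu>bar \<mu> \<longleftrightarrow>
     (\<forall>t\<in>{0..T}. M1 N (\<mu> t)) \<and>
     (\<forall>t\<in>{0..T}. ((\<lambda>s. W1 (\<mu> s) (\<mu> t)) \<longlongrightarrow> 0) (at t within {0..T})) \<and>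
     (\<exists>\<gamma> :: real \<Rightarrow> 'a \<Rightarrow> 'a.
        (\<forall>t\<in>{0..T}. \<gamma> t \<in> borel_measurable borel \<and> \<mu> t = distr \<mu>bar borel (\<gamma> t)) \<and>
        (\<forall>t\<in>{0..T}. \<forall>x. ((\<lambda>s. vel K vd (\<mu> s) (\<gamma> s x)) has_integral (\<gamma> t x - x)) {0..t}))"

definition KN :: "('a::euclidean_space \<Rightarrow> 'a) \<Rightarrow> real \<Rightarrow> real \<Rightarrow> nat \<Rightarrow> 'a \<Rightarrow> 'a" where
  "KN Kc \<alpha> \<beta> N z = (real N powr (-\<alpha>)) *\<^sub>R Kc ((1 / real N powr \<beta>) *\<^sub>R z)"

definition empirical :: "nat \<Rightarrow> (nat \<Rightarrow> 'a::euclidean_space) \<Rightarrow> 'a measure" where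
  "empirical N X = distr (count_space {..<N}) borel X"

definition smoothed :: "nat \<Rightarrow> (nat \<Rightarrow> 'a::euclidean_space) \<Rightarrow> ('a \<Rightarrow> real) \<Rightarrow> real \<Rightarrow> 'a measure" where
  "smoothed N X f r = density lborel
     (\<lambda>x. \<Sum>i<N. ennreal (inverse (r ^ DIM('a)) * f ((1 / r) *\<^sub>R (x - X i))))"

end

theory Submission
  imports Defs
begin

lemma gronwall:
  fixes \<phi> :: "real \<Rightarrow> real"
  assumes cont: "continuous_on {0..T} \<phi>" and c: "c \<ge> 0"
    and le: "\<And>s. s \<in> {0..T} \<Longrightarrow> \<phi> s \<le> a + c * integral {0..s} \<phi>"
    and t: "t \<in> {0..T}"
  shows "\<phi> t \<le> a * exp (c * t)"
proof -
  define \<Phi> where "\<Phi> s = integral {0..s} \<phi>" for s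
  define \<psi> where "\<psi> s = exp (- c * s) * (a + c * \<Phi> s)" for s
  have der: "(\<Phi> has_real_derivative \<phi> s) (at s within {0..T})" if "s \<in> {0..T}" for s
    unfolding \<Phi>_def using integral_has_real_derivative[OF cont that] .
  have contP: "continuous_on {0..T} \<Phi>"
    unfolding \<Phi>_def by (rule indefinite_integral_continuous_1[OF integrable_continuous_real[OF cont]])
  have contpsi: "continuous_on {0..t} \<psi>"
    unfolding \<psi>_def using t
    by (intro continuous_intros continuous_on_subset[OF contP]) auto
  have "\<psi> t \<le> \<psi> 0"
  proof (rule DERIV_nonpos_imp_decreasing_open[OF _ _ contpsi])
    show "0 \<le> t" using t by auto
    fix s assume s: "0 < s" "s < t"
    then have sT: "s \<in> {0..T}" and si: "s \<in> interior {0..T}" using t by auto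
    have dP: "(\<Phi> has_real_derivative \<phi> s) (at s)"
      using der[OF sT] at_within_interior[OF si] by simp
    have "(\<psi> has_real_derivative
        (- c * exp (- c * s)) * (a + c * \<Phi> s) + exp (- c * s) * (c * \<phi> s)) (at s)"
      unfolding \<psi>_def
      by (auto intro!: derivative_eq_intros dP)
    moreover have "(- c * exp (- c * s)) * (a + c * \<Phi> s) + exp (- c * s) * (c * \<phi> s)
        = c * exp (- c * s) * (\<phi> s - (a + c * \<Phi> s))"
      by (simp add: algebra_simps)
    moreover have "c * exp (- c * s) * (\<phi> s - (a + c * \<Phi> s)) \<le> 0"
      using le[OF sT] c unfolding \<Phi>_def
      by (intro mult_nonneg_nonpos) auto
    ultimately show "\<exists>y. (\<psi> has_real_derivative y) (at s) \<and> y \<le> 0" by metis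
  qed
  moreover have "\<psi> 0 = a" unfolding \<psi>_def \<Phi>_def by simp
  ultimately have "\<psi> t \<le> a" by simp
  then have "exp (- c * t) * (a + c * \<Phi> t) \<le> a" unfolding \<psi>_def .
  note h = this
  have eq: "exp (c * t) * (exp (- c * t) * (a + c * \<Phi> t)) = a + c * \<Phi> t"
    by (simp add: mult.assoc[symmetric] exp_minus_inverse)
  have "exp (c * t) * (exp (- c * t) * (a + c * \<Phi> t)) \<le> exp (c * t) * a"
    by (rule mult_left_mono[OF h]) simp
  then have "a + c * \<Phi> t \<le> a * exp (c * t)" by (metis eq mult.commute)
  with le[OF t] show ?thesis unfolding \<Phi>_def by simp
qed


locale setting =
  fixes K vd :: "'a::euclidean_space \<Rightarrow> 'a" and T :: real and N :: nat
    and X :: "nat \<Rightarrow> 'a" and f :: "'a \<Rightarrow> real" and r :: real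
    and \<mu> \<nu> :: "real \<Rightarrow> 'a measure" and \<gamma> \<gamma>' :: "real \<Rightarrow> 'a \<Rightarrow> 'a"
    and Lv LK LKN B :: real
  assumes T: "T \<ge> 0"
    and vd: "Lv-lipschitz_on UNIV vd"
    and K: "LKN-lipschitz_on UNIV K" and NLK: "real N * LKN \<le> LK" and KB: "\<And>z. norm (K z) \<le> B"
    and N: "N \<ge> 1" and r: "r > 0"
    and sep: "\<And>i j. i < N \<Longrightarrow> j < N \<Longrightarrow> i \<noteq> j \<Longrightarrow> r < dist (X j) (X i) / 2"
    and fnn: "\<And>x. f x \<ge> 0" and fsupp: "\<And>x. x \<notin> cball 0 1 \<Longrightarrow> f x = 0"
    and fmeas: "f \<in> borel_measurable borel"
    and muM1: "\<And>t. t \<in> {0..T} \<Longrightarrow> M1 (real N) (\<mu> t)"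
    and nuM1: "\<And>t. t \<in> {0..T} \<Longrightarrow> M1 (real N) (\<nu> t)"
    and gmeas: "\<And>t. t \<in> {0..T} \<Longrightarrow> \<gamma> t \<in> borel_measurable borel"
    and g'meas: "\<And>t. t \<in> {0..T} \<Longrightarrow> \<gamma>' t \<in> borel_measurable borel"
    and mudef: "\<And>t. t \<in> {0..T} \<Longrightarrow> \<mu> t = distr (empirical N X) borel (\<gamma> t)"
    and nudef: "\<And>t. t \<in> {0..T} \<Longrightarrow> \<nu> t = distr (smoothed N X f r) borel (\<gamma>' t)"
    and gint: "\<And>t x. t \<in> {0..T} \<Longrightarrow>
        ((\<lambda>s. vel K vd (\<mu> s) (\<gamma> s x)) has_integral (\<gamma> t x - x)) {0..t}"
    and g'int: "\<And>t x. t \<in> {0..T} \<Longrightarrow>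
        ((\<lambda>s. vel K vd (\<nu> s) (\<gamma>' s x)) has_integral (\<gamma>' t x - x)) {0..t}"
begin

definition "a = empirical N X"
definition "b = smoothed N X f r"
definition "gg j y = inverse (r ^ DIM('a)) * f ((1 / r) *\<^sub>R (y - X j))"
definition "p y = (\<Sum>i<N. indicator (cball (X i) r) y *\<^sub>R X i)"

lemma gg_nn: "gg j y \<ge> 0"
  unfolding gg_def using fnn r by simp

lemma gg_meas[measurable]: "gg j \<in> borel_measurable borel"
  unfolding gg_def using fmeas by measurable

lemma gg_supp: assumes "gg j y \<noteq> 0" shows "y \<in> cball (X j) r"
proof (rule ccontr)
  assume "y \<notin> cball (X j) r"
  then have "dist (X j) y > r" by simp
  have eq: "norm ((1 / r) *\<^sub>R (y - X j)) = norm (y - X j) / r"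
    using r by (simp only: norm_scaleR) simp
  have n: "norm (y - X j) > r" using \<open>dist (X j) y > r\<close> by (simp add: dist_norm norm_minus_commute)
  have "1 < norm (y - X j) / r" using r n by simp
  then have "norm ((1 / r) *\<^sub>R (y - X j)) > 1"
    unfolding eq .
  then have "f ((1 / r) *\<^sub>R (y - X j)) = 0" by (intro fsupp) simp
  then show False using assms unfolding gg_def by simp
qed

lemma p_meas[measurable]: "p \<in> borel_measurable borel"
  unfolding p_def
  by (intro borel_measurable_sum borel_measurable_scaleR borel_measurable_indicator) auto

lemma p_eq: assumes j: "j < N" and y: "y \<in> cball (X j) r" shows "p y = X j"
proof -
  have "p y = (\<Sum>i<N. if i = j then X j else 0)"
    unfolding p_def
  proof (rule sum.cong[OF refl])
    fix i assume i: "i \<in> {..<N}"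
    show "indicator (cball (X i) r) y *\<^sub>R X i = (if i = j then X j else 0)"
    proof (cases "i = j")
      case False
      have "y \<notin> cball (X i) r"
      proof
        assume "y \<in> cball (X i) r"
        then have "dist (X j) (X i) \<le> 2 * r" using y
          by (metis dist_commute dist_triangle mem_cball mult_2 add_mono order_trans)
        with sep[OF j _ False[symmetric]] i show False by (auto simp: dist_commute)
      qed
      then show ?thesis using False by simp
    qed (use y in simp)
  qed
  then show ?thesis using j by simp
qed

lemma b_def': "b = density lborel (\<lambda>y. \<Sum>i<N. ennreal (gg i y))"
  unfolding b_def smoothed_def gg_def ..

lemma sets_b[measurable_cong, simp]: "sets b = sets borel"
  unfolding b_def' by simp

lemma space_b[simp]: "space b = UNIV"
  unfolding b_def' by simp

lemma nn_b: assumes h: "h \<in> borel_measurable borel"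
  shows "(\<integral>\<^sup>+ y. h y \<partial>b) = (\<Sum>j<N. \<integral>\<^sup>+ y. ennreal (gg j y) * h y \<partial>lborel)"
proof -
  have "(\<integral>\<^sup>+ y. h y \<partial>b) = (\<integral>\<^sup>+ y. (\<Sum>i<N. ennreal (gg i y)) * h y \<partial>lborel)"
    unfolding b_def' using h by (subst nn_integral_density) auto
  also have "\<dots> = (\<integral>\<^sup>+ y. (\<Sum>i<N. ennreal (gg i y) * h y) \<partial>lborel)"
    by (simp add: sum_distrib_right)
  also have "\<dots> = (\<Sum>j<N. \<integral>\<^sup>+ y. ennreal (gg j y) * h y \<partial>lborel)"
    using h by (intro nn_integral_sum) auto
  finally show ?thesis .
qed

definition "gg0 y = inverse (r ^ DIM('a)) * f ((1 / r) *\<^sub>R y)"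
definition "m = (\<integral>\<^sup>+ y. ennreal (gg0 y) \<partial>lborel)"

lemma gg_shift: "(\<integral>\<^sup>+ y. ennreal (gg j y) \<partial>lborel) = m"
proof -
  have gm: "gg0 \<in> borel_measurable borel" unfolding gg0_def using fmeas by measurable
  have "(\<integral>\<^sup>+ y. ennreal (gg j y) \<partial>lborel) = (\<integral>\<^sup>+ y. ennreal (gg0 (y - X j)) \<partial>lborel)"
    unfolding gg_def gg0_def ..
  also have "\<dots> = (\<integral>\<^sup>+ y. ennreal (gg0 (y - X j)) \<partial>distr lborel borel ((+) (X j)))"
    by (simp add: lborel_distr_plus)
  also have "\<dots> = (\<integral>\<^sup>+ y. ennreal (gg0 ((X j + y) - X j)) \<partial>lborel)"
    using gm by (subst nn_integral_distr) auto
  also have "\<dots> = m" unfolding m_def by simp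
  finally show ?thesis .
qed

lemma mass_b: "emeasure b UNIV = of_nat N * m"
proof -
  have "emeasure b UNIV = (\<integral>\<^sup>+ y. 1 \<partial>b)" by (simp add: nn_integral_const)
  also have "\<dots> = (\<Sum>j<N. \<integral>\<^sup>+ y. ennreal (gg j y) * 1 \<partial>lborel)"
    by (rule nn_b) simp
  also have "\<dots> = of_nat N * m" by (simp add: gg_shift)
  finally show ?thesis .
qed

lemma mass_b': "emeasure b UNIV = of_nat N"
proof -
  have "M1 (real N) (\<nu> 0)" using nuM1[of 0] T by simp
  then have "emeasure (\<nu> 0) (space (\<nu> 0)) = ennreal (real N)" unfolding M1_def by simp
  moreover have "\<nu> 0 = distr b borel (\<gamma>' 0)" using nudef[of 0] T unfolding b_def by simp
  moreover have "\<gamma>' 0 \<in> borel_measurable borel" using g'meas[of 0] T by simp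
  ultimately show ?thesis by (simp add: emeasure_distr ennreal_of_nat_eq_real_of_nat)
qed

lemma m1: "m = 1"
proof -
  have e: "of_nat N * m = (of_nat N :: ennreal)" using mass_b mass_b' by simp
  have "m \<noteq> \<infinity>"
  proof
    assume "m = \<infinity>"
    then have "of_nat N * m = \<infinity>" using N by (simp add: ennreal_mult_eq_top_iff)
    with e show False by simp
  qed
  then obtain m' where m': "m = ennreal m'" "m' \<ge> 0" by (cases m) auto
  then have "ennreal (real N * m') = ennreal (real N)" using e
    by (simp add: ennreal_mult ennreal_of_nat_eq_real_of_nat)
  then have "real N * m' = real N" using m' by (simp add: ennreal_inj)
  then have "m' = 1" using N by simp
  then show ?thesis using m' by simp
qed

lemma gg_mass: "(\<integral>\<^sup>+ y. ennreal (gg j y) \<partial>lborel) = 1"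
  using gg_shift m1 by simp

lemma nn_pb: assumes F: "F \<in> borel_measurable borel"
  shows "(\<integral>\<^sup>+ y. F (p y) \<partial>b) = (\<Sum>j<N. F (X j))"
proof -
  have "(\<integral>\<^sup>+ y. F (p y) \<partial>b) = (\<Sum>j<N. \<integral>\<^sup>+ y. ennreal (gg j y) * F (p y) \<partial>lborel)"
    using F by (intro nn_b measurable_compose[OF p_meas F])
  also have "\<dots> = (\<Sum>j<N. \<integral>\<^sup>+ y. ennreal (gg j y) * F (X j) \<partial>lborel)"
  proof (rule sum.cong[OF refl], rule nn_integral_cong)
    fix j y assume j: "j \<in> {..<N}"
    show "ennreal (gg j y) * F (p y) = ennreal (gg j y) * F (X j)"
    proof (cases "gg j y = 0")
      case False
      then show ?thesis using p_eq[of j y] gg_supp[OF False] j by simp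
    qed simp
  qed
  also have "\<dots> = (\<Sum>j<N. F (X j))"
    by (simp add: nn_integral_multc gg_mass)
  finally show ?thesis .
qed

lemma nn_a: assumes F: "F \<in> borel_measurable borel"
  shows "(\<integral>\<^sup>+ x. F x \<partial>a) = (\<Sum>j<N. F (X j))"
  unfolding a_def empirical_def using F
  by (subst nn_integral_distr) (auto simp: nn_integral_count_space_finite)

lemma push: assumes h: "h \<in> borel_measurable borel"
  shows "distr b borel (\<lambda>y. h (p y)) = distr a borel h"
proof (rule measure_eqI)
  show "sets (distr b borel (\<lambda>y. h (p y))) = sets (distr a borel h)" by simp
  fix A assume A: "A \<in> sets (distr b borel (\<lambda>y. h (p y)))"
  then have A': "A \<in> sets borel" by simp
  have "emeasure (distr b borel (\<lambda>y. h (p y))) A = (\<integral>\<^sup>+ y. indicator A y \<partial>distr b borel (\<lambda>y. h (p y)))"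
    using A' by simp
  also have "\<dots> = (\<integral>\<^sup>+ y. indicator A (h (p y)) \<partial>b)"
    using h A' by (subst nn_integral_distr) auto
  also have "\<dots> = (\<Sum>j<N. indicator A (h (X j)))"
    using h A' by (intro nn_pb[where F="\<lambda>x. indicator A (h x)"] measurable_compose[OF h borel_measurable_indicator]) auto
  also have "\<dots> = (\<integral>\<^sup>+ x. indicator A (h x) \<partial>a)"
    using h A' by (intro nn_a[symmetric] measurable_compose[OF h borel_measurable_indicator]) auto
  also have "\<dots> = (\<integral>\<^sup>+ y. indicator A y \<partial>distr a borel h)"
    using h A' unfolding a_def empirical_def by (subst nn_integral_distr) auto
  also have "\<dots> = emeasure (distr a borel h) A"
    using A' unfolding a_def empirical_def by simp
  finally show "emeasure (distr b borel (\<lambda>y. h (p y))) A = emeasure (distr a borel h) A" .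
qed

end

lemma flow_cont:
  fixes g :: "real \<Rightarrow> 'b::euclidean_space"
  assumes h: "\<And>t. t \<in> {0..T} \<Longrightarrow> (v has_integral (g t - x)) {0..t}"
  shows "continuous_on {0..T} g"
proof (cases "T \<ge> 0")
  case True
  have vi: "v integrable_on {0..T}" using h[of T] True by (auto simp: has_integral_integrable)
  have "continuous_on {0..T} (\<lambda>t. x + integral {0..t} v)"
    by (intro continuous_intros indefinite_integral_continuous_1[OF vi])
  moreover have "x + integral {0..t} v = g t" if "t \<in> {0..T}" for t
    using integral_unique[OF h[OF that]] by simp
  ultimately show ?thesis using continuous_on_eq by blast
qed simp


context setting begin

lemma K_cont: "continuous_on UNIV K"
  using lipschitz_on_continuous_on[OF K] .

lemma K_meas[measurable]: "K \<in> borel_measurable borel"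
  using borel_measurable_continuous_onI[OF K_cont] .

lemma Klip: "norm (K x - K y) \<le> LKN * norm (x - y)"
  using lipschitz_on_normD[OF K] by simp

lemma vdlip: "norm (vd x - vd y) \<le> Lv * norm (x - y)"
  using lipschitz_on_normD[OF vd] by simp

lemma LKN_nn: "LKN \<ge> 0" using lipschitz_on_nonneg[OF K] .
lemma Lv_nn: "Lv \<ge> 0" using lipschitz_on_nonneg[OF vd] .
lemma LK_nn: "LK \<ge> 0"
proof -
  have "0 \<le> real N * LKN" using LKN_nn by simp
  then show ?thesis using NLK by linarith
qed

lemma K_int: assumes M: "finite_measure M" and q: "q \<in> borel_measurable M"
  shows "integrable M (\<lambda>y. K (q y - u))"
proof -
  interpret finite_measure M by (rule M)
  show ?thesis
    by (intro integrable_const_bound[where B=B] AE_I2 KB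
        measurable_compose[OF borel_measurable_diff[OF q measurable_const] K_meas]) simp
qed

lemma M1_fin: assumes "M1 (real N) M" shows "finite_measure M"
  using assms unfolding M1_def by (intro finite_measureI) auto

lemma M1_measure: assumes "M1 (real N) M" shows "measure M (space M) = real N"
  using assms unfolding M1_def by (simp add: measure_def)

lemma M1_sets: assumes "M1 (real N) M" shows "sets M = sets borel"
  using assms unfolding M1_def by simp

lemma vel_lip: assumes M: "M1 (real N) M"
  shows "norm (vel K vd M u - vel K vd M w) \<le> (Lv + real N * LKN) * norm (u - w)"
proof -
  have fin: "finite_measure M" using M1_fin[OF M] .
  have ms: "sets M = sets borel" using M1_sets[OF M] .
  have mid: "id \<in> borel_measurable M" unfolding id_def by (rule measurable_ident_sets[OF ms])
  have i1: "integrable M (\<lambda>y. K (y - u))" using K_int[OF fin mid, of u] by simp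
  have i2: "integrable M (\<lambda>y. K (y - w))" using K_int[OF fin mid, of w] by simp
  have "norm ((\<integral>y. K (y - u) \<partial>M) - (\<integral>y. K (y - w) \<partial>M)) = norm (\<integral>y. K (y - u) - K (y - w) \<partial>M)"
    using i1 i2 by (simp add: integral_diff)
  also have "\<dots> \<le> (\<integral>y. norm (K (y - u) - K (y - w)) \<partial>M)"
    by (rule integral_norm_bound)
  also have "\<dots> \<le> (\<integral>y. LKN * norm (u - w) \<partial>M)"
  proof (rule integral_mono)
    show "integrable M (\<lambda>y. norm (K (y - u) - K (y - w)))"
      by (intro integrable_norm Bochner_Integration.integrable_diff i1 i2)
    show "integrable M (\<lambda>y. LKN * norm (u - w))"
      by (rule finite_measure.integrable_const[OF fin])
    fix y show "norm (K (y - u) - K (y - w)) \<le> LKN * norm (u - w)"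
    proof -
      have "(y - u) - (y - w) = w - u" by simp
      then have "norm ((y - u) - (y - w)) = norm (u - w)" using norm_minus_commute[of w u] by simp
      then show ?thesis using Klip[of "y - u" "y - w"] by simp
    qed
  qed
  also have "\<dots> = real N * LKN * norm (u - w)"
    using M1_measure[OF M] by simp
  finally have h: "norm ((\<integral>y. K (y - u) \<partial>M) - (\<integral>y. K (y - w) \<partial>M)) \<le> real N * LKN * norm (u - w)" .
  have "vel K vd M u - vel K vd M w = (vd u - vd w) - ((\<integral>y. K (y - u) \<partial>M) - (\<integral>y. K (y - w) \<partial>M))"
    unfolding vel_def by (simp add: algebra_simps)
  then have "norm (vel K vd M u - vel K vd M w) \<le> norm (vd u - vd w) + norm ((\<integral>y. K (y - u) \<partial>M) - (\<integral>y. K (y - w) \<partial>M))"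
    by (simp only: norm_triangle_ineq4)
  also have "\<dots> \<le> Lv * norm (u - w) + real N * LKN * norm (u - w)"
    using vdlip h by (rule add_mono)
  finally show ?thesis by (simp add: algebra_simps)
qed


definition "L0 = Lv + 2 * LK"
definition "E = exp (L0 * T)"

lemma L0_nn: "L0 \<ge> 0" unfolding L0_def using Lv_nn LK_nn by simp

lemma E_bound: "t \<in> {0..T} \<Longrightarrow> exp (L0 * t) \<le> E"
  unfolding E_def using L0_nn by (auto intro!: mult_left_mono)

lemma E_ge1: "E \<ge> 1" unfolding E_def using L0_nn T by simp

lemma g_cont: "continuous_on {0..T} (\<lambda>s. \<gamma> s x)"
  by (rule flow_cont[OF gint])

lemma g'_cont: "continuous_on {0..T} (\<lambda>s. \<gamma>' s x)"
  by (rule flow_cont[OF g'int])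

lemma flow_lip0: assumes t: "t \<in> {0..T}"
  shows "norm (\<gamma>' t x - \<gamma>' t y) \<le> norm (x - y) * exp (L0 * t)"
proof -
  define \<phi> where "\<phi> s = norm (\<gamma>' s x - \<gamma>' s y)" for s
  have cphi: "continuous_on {0..T} \<phi>"
    unfolding \<phi>_def by (intro continuous_intros g'_cont)
  have main: "\<phi> s \<le> norm (x - y) + L0 * integral {0..s} \<phi>" if s: "s \<in> {0..T}" for s
  proof -
    define G where "G \<sigma> = vel K vd (\<nu> \<sigma>) (\<gamma>' \<sigma> x) - vel K vd (\<nu> \<sigma>) (\<gamma>' \<sigma> y)" for \<sigma>
    have hG: "(G has_integral ((\<gamma>' s x - x) - (\<gamma>' s y - y))) {0..s}"
      unfolding G_def by (intro has_integral_diff g'int s)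
    have sub: "{0..s} \<subseteq> {0..T}" using s by auto
    have cphi': "continuous_on {0..s} \<phi>" using continuous_on_subset[OF cphi sub] .
    have "norm (integral {0..s} G) \<le> integral {0..s} (\<lambda>\<sigma>. L0 * \<phi> \<sigma>)"
    proof (rule integral_norm_bound_integral)
      show "G integrable_on {0..s}" using hG by blast
      show "(\<lambda>\<sigma>. L0 * \<phi> \<sigma>) integrable_on {0..s}"
        by (intro integrable_continuous_real continuous_intros cphi')
      fix \<sigma> assume \<sigma>: "\<sigma> \<in> {0..s}"
      then have \<sigma>T: "\<sigma> \<in> {0..T}" using sub by auto
      have "norm (G \<sigma>) \<le> (Lv + real N * LKN) * \<phi> \<sigma>"
        unfolding G_def \<phi>_def by (rule vel_lip[OF nuM1[OF \<sigma>T]])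
      also have "\<dots> \<le> L0 * \<phi> \<sigma>"
        unfolding L0_def \<phi>_def using NLK LK_nn by (intro mult_right_mono) auto
      finally show "norm (G \<sigma>) \<le> L0 * \<phi> \<sigma>" .
    qed
    also have "\<dots> = L0 * integral {0..s} \<phi>" by simp
    finally have i: "norm (integral {0..s} G) \<le> L0 * integral {0..s} \<phi>" .
    have "\<gamma>' s x - \<gamma>' s y = (x - y) + integral {0..s} G"
      using integral_unique[OF hG] by simp
    then have "\<phi> s \<le> norm (x - y) + norm (integral {0..s} G)"
      unfolding \<phi>_def by (simp add: norm_triangle_ineq)
    with i show ?thesis by simp
  qed
  have "\<phi> t \<le> norm (x - y) * exp (L0 * t)"
    by (rule gronwall[OF cphi L0_nn main t])
  then show ?thesis unfolding \<phi>_def .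
qed

lemma flow_lip: assumes t: "t \<in> {0..T}"
  shows "norm (\<gamma>' t x - \<gamma>' t y) \<le> E * norm (x - y)"
proof -
  have "norm (x - y) * exp (L0 * t) \<le> norm (x - y) * E"
    using E_bound[OF t] by (intro mult_left_mono) auto
  then show ?thesis using flow_lip0[OF t, of x y] by (simp add: mult.commute)
qed

definition "cost s = (\<integral>\<^sup>+ y. ennreal (norm (\<gamma> s (p y) - \<gamma>' s y)) \<partial>b)"
definition "\<Delta> s = (\<Sum>j<N. norm (\<gamma> s (X j) - \<gamma>' s (X j)))"

lemma Delta_nn: "\<Delta> s \<ge> 0" unfolding \<Delta>_def by (simp add: sum_nonneg)

lemma integrand_meas:
  assumes s: "s \<in> {0..T}"
  shows "(\<lambda>y. ennreal (norm (\<gamma> s (p y) - \<gamma>' s y))) \<in> borel_measurable borel"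
proof -
  have "(\<lambda>y. \<gamma> s (p y)) \<in> borel_measurable borel"
    using measurable_compose[OF p_meas gmeas[OF s]] .
  moreover have "\<gamma>' s \<in> borel_measurable borel" using g'meas[OF s] .
  ultimately show ?thesis by measurable
qed

lemma cost_bound: assumes s: "s \<in> {0..T}"
  shows "cost s \<le> ennreal (\<Delta> s + real N * E * r)"
proof -
  have "cost s = (\<Sum>j<N. \<integral>\<^sup>+ y. ennreal (gg j y) * ennreal (norm (\<gamma> s (p y) - \<gamma>' s y)) \<partial>lborel)"
    unfolding cost_def by (rule nn_b[OF integrand_meas[OF s]])
  also have "\<dots> \<le> (\<Sum>j<N. \<integral>\<^sup>+ y. ennreal (gg j y) * ennreal (norm (\<gamma> s (X j) - \<gamma>' s (X j)) + E * r) \<partial>lborel)"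
  proof (rule sum_mono, rule nn_integral_mono)
    fix j y assume j: "j \<in> {..<N}"
    show "ennreal (gg j y) * ennreal (norm (\<gamma> s (p y) - \<gamma>' s y))
        \<le> ennreal (gg j y) * ennreal (norm (\<gamma> s (X j) - \<gamma>' s (X j)) + E * r)"
    proof (cases "gg j y = 0")
      case False
      have y: "y \<in> cball (X j) r" using gg_supp[OF False] .
      have py: "p y = X j" using p_eq[of j y] j y by simp
      have "norm (\<gamma> s (X j) - \<gamma>' s y) \<le> norm (\<gamma> s (X j) - \<gamma>' s (X j)) + norm (\<gamma>' s (X j) - \<gamma>' s y)"
        using norm_triangle_ineq[of "\<gamma> s (X j) - \<gamma>' s (X j)" "\<gamma>' s (X j) - \<gamma>' s y"] by simp
      also have "norm (\<gamma>' s (X j) - \<gamma>' s y) \<le> E * norm (X j - y)" by (rule flow_lip[OF s])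
      also have "E * norm (X j - y) \<le> E * r"
        using y E_ge1 by (intro mult_left_mono) (auto simp: dist_norm)
      finally have "norm (\<gamma> s (p y) - \<gamma>' s y) \<le> norm (\<gamma> s (X j) - \<gamma>' s (X j)) + E * r"
        using py by simp
      then show ?thesis by (intro mult_left_mono) (auto intro: ennreal_leI)
    qed simp
  qed
  also have "\<dots> = (\<Sum>j<N. ennreal (norm (\<gamma> s (X j) - \<gamma>' s (X j)) + E * r))"
    by (simp add: nn_integral_multc gg_mass)
  also have "\<dots> = ennreal (\<Sum>j<N. norm (\<gamma> s (X j) - \<gamma>' s (X j)) + E * r)"
    using E_ge1 r by (intro sum_ennreal) simp
  also have "(\<Sum>j<N. norm (\<gamma> s (X j) - \<gamma>' s (X j)) + E * r) = \<Delta> s + real N * E * r"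
    unfolding \<Delta>_def by (simp add: sum.distrib)
  finally show ?thesis .
qed

lemma W1_cost: assumes t: "t \<in> {0..T}"
  shows "W1 (\<mu> t) (\<nu> t) \<le> cost t"
proof -
  have m1: "(\<lambda>y. \<gamma> t (p y)) \<in> borel_measurable borel"
    using measurable_compose[OF p_meas gmeas[OF t]] .
  have m2: "\<gamma>' t \<in> borel_measurable borel" using g'meas[OF t] .
  have mP: "(\<lambda>y. (\<gamma> t (p y), \<gamma>' t y)) \<in> borel_measurable b"
    using m1 m2 by (simp add: measurable_cong_sets[OF sets_b refl])
  define \<pi> where "\<pi> = distr b borel (\<lambda>y. (\<gamma> t (p y), \<gamma>' t y))"
  have "\<pi> \<in> couplings (\<mu> t) (\<nu> t)"
    unfolding couplings_def
  proof (intro CollectI conjI)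
    show "sets \<pi> = sets borel" unfolding \<pi>_def by simp
    have "distr \<pi> borel fst = distr b borel (fst \<circ> (\<lambda>y. (\<gamma> t (p y), \<gamma>' t y)))"
      unfolding \<pi>_def by (rule distr_distr[OF _ mP]) (intro borel_measurable_continuous_onI continuous_intros)
    also have "\<dots> = distr b borel (\<lambda>y. \<gamma> t (p y))" by (simp add: comp_def)
    also have "\<dots> = distr a borel (\<gamma> t)" by (rule push[OF gmeas[OF t]])
    also have "\<dots> = \<mu> t" using mudef[OF t] unfolding a_def by simp
    finally show "distr \<pi> borel fst = \<mu> t" .
    have "distr \<pi> borel snd = distr b borel (snd \<circ> (\<lambda>y. (\<gamma> t (p y), \<gamma>' t y)))"
      unfolding \<pi>_def by (rule distr_distr[OF _ mP]) (intro borel_measurable_continuous_onI continuous_intros)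
    also have "\<dots> = distr b borel (\<gamma>' t)" by (simp add: comp_def)
    also have "\<dots> = \<nu> t" using nudef[OF t] unfolding b_def by simp
    finally show "distr \<pi> borel snd = \<nu> t" .
  qed
  then have "W1 (\<mu> t) (\<nu> t) \<le> (\<integral>\<^sup>+ q. ennreal (norm (fst q - snd q)) \<partial>\<pi>)"
    unfolding W1_def by (rule INF_lower)
  also have "\<dots> = cost t"
  proof -
    have "(\<lambda>q::'a\<times>'a. norm (fst q - snd q)) \<in> borel_measurable borel"
      by (intro borel_measurable_continuous_onI continuous_intros)
    then show ?thesis
      unfolding \<pi>_def cost_def using mP by (subst nn_integral_distr) auto
  qed
  finally show ?thesis .
qed

lemma b_fin: "finite_measure b"
  using mass_b' by (intro finite_measureI) simp

lemma vel_diff: assumes s: "s \<in> {0..T}"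
  shows "norm (vel K vd (\<mu> s) u - vel K vd (\<nu> s) w)
     \<le> Lv * norm (u - w) + LKN * (\<Delta> s + real N * E * r + real N * norm (u - w))"
proof -
  have m1: "(\<lambda>y. \<gamma> s (p y)) \<in> borel_measurable b"
    using measurable_compose[OF p_meas gmeas[OF s]] by (simp add: measurable_cong_sets[OF sets_b refl])
  have m1': "(\<lambda>y. \<gamma> s (p y)) \<in> borel_measurable borel"
    using measurable_compose[OF p_meas gmeas[OF s]] .
  have m2: "\<gamma>' s \<in> borel_measurable b"
    using g'meas[OF s] by (simp add: measurable_cong_sets[OF sets_b refl])
  have Ku: "(\<lambda>z. K (z - u)) \<in> borel_measurable borel" for u :: 'a by measurable
  have I1: "(\<integral>z. K (z - u) \<partial>\<mu> s) = (\<integral>y. K (\<gamma> s (p y) - u) \<partial>b)"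
  proof -
    have "\<mu> s = distr b borel (\<lambda>y. \<gamma> s (p y))"
      using mudef[OF s] push[OF gmeas[OF s]] unfolding a_def by simp
    then show ?thesis using integral_distr[OF m1 Ku] by simp
  qed
  have I2: "(\<integral>z. K (z - w) \<partial>\<nu> s) = (\<integral>y. K (\<gamma>' s y - w) \<partial>b)"
  proof -
    have "\<nu> s = distr b borel (\<gamma>' s)"
      using nudef[OF s] unfolding b_def by simp
    then show ?thesis using integral_distr[OF m2 Ku] by simp
  qed
  have i1: "integrable b (\<lambda>y. K (\<gamma> s (p y) - u))" by (rule K_int[OF b_fin m1])
  have i2: "integrable b (\<lambda>y. K (\<gamma>' s y - w))" by (rule K_int[OF b_fin m2])
  define F where "F y = K (\<gamma> s (p y) - u) - K (\<gamma>' s y - w)" for y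
  have iF: "integrable b F" unfolding F_def by (intro Bochner_Integration.integrable_diff i1 i2)
  have diffeq: "(\<integral>z. K (z - u) \<partial>\<mu> s) - (\<integral>z. K (z - w) \<partial>\<nu> s) = (\<integral>y. F y \<partial>b)"
    unfolding I1 I2 F_def using i1 i2 by (simp add: integral_diff)
  have pw: "norm (F y) \<le> LKN * norm (\<gamma> s (p y) - \<gamma>' s y) + LKN * norm (u - w)" for y
  proof -
    have "norm (F y) \<le> LKN * norm ((\<gamma> s (p y) - u) - (\<gamma>' s y - w))"
      unfolding F_def by (rule Klip)
    also have "(\<gamma> s (p y) - u) - (\<gamma>' s y - w) = (\<gamma> s (p y) - \<gamma>' s y) - (u - w)" by simp
    also have "LKN * norm ((\<gamma> s (p y) - \<gamma>' s y) - (u - w))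
        \<le> LKN * (norm (\<gamma> s (p y) - \<gamma>' s y) + norm (u - w))"
      using LKN_nn by (intro mult_left_mono norm_triangle_ineq4) auto
    finally show ?thesis by (simp add: algebra_simps)
  qed
  have "ennreal (norm (\<integral>y. F y \<partial>b)) \<le> (\<integral>\<^sup>+ y. norm (F y) \<partial>b)"
    by (rule integral_norm_bound_ennreal[OF iF])
  also have "\<dots> \<le> (\<integral>\<^sup>+ y. ennreal LKN * ennreal (norm (\<gamma> s (p y) - \<gamma>' s y)) + ennreal (LKN * norm (u - w)) \<partial>b)"
  proof (rule nn_integral_mono)
    fix y
    have "ennreal (norm (F y)) \<le> ennreal (LKN * norm (\<gamma> s (p y) - \<gamma>' s y) + LKN * norm (u - w))"
      using pw by (rule ennreal_leI)
    also have "\<dots> = ennreal LKN * ennreal (norm (\<gamma> s (p y) - \<gamma>' s y)) + ennreal (LKN * norm (u - w))"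
      using LKN_nn by (simp add: ennreal_plus ennreal_mult)
    finally show "ennreal (norm (F y)) \<le> \<dots>" .
  qed
  also have "\<dots> = ennreal LKN * cost s + ennreal (LKN * norm (u - w)) * emeasure b (space b)"
    unfolding cost_def using integrand_meas[OF s]
    by (subst nn_integral_add) (auto simp: nn_integral_cmult nn_integral_const)
  also have "\<dots> \<le> ennreal LKN * ennreal (\<Delta> s + real N * E * r) + ennreal (LKN * norm (u - w)) * ennreal (real N)"
    using cost_bound[OF s] mass_b' by (intro add_mono mult_left_mono) (auto simp: ennreal_of_nat_eq_real_of_nat)
  also have "\<dots> = ennreal (LKN * (\<Delta> s + real N * E * r + real N * norm (u - w)))"
  proof -
    have x1: "0 \<le> \<Delta> s + real N * E * r" using Delta_nn E_ge1 r by simp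
    have x2: "0 \<le> LKN * norm (u - w)" using LKN_nn by simp
    have e1: "ennreal LKN * ennreal (\<Delta> s + real N * E * r) = ennreal (LKN * (\<Delta> s + real N * E * r))"
      by (rule ennreal_mult[symmetric, OF LKN_nn x1])
    have e2: "ennreal (LKN * norm (u - w)) * ennreal (real N) = ennreal (LKN * norm (u - w) * real N)"
      by (rule ennreal_mult[symmetric, OF x2]) simp
    have e3: "ennreal (LKN * (\<Delta> s + real N * E * r)) + ennreal (LKN * norm (u - w) * real N)
       = ennreal (LKN * (\<Delta> s + real N * E * r) + LKN * norm (u - w) * real N)"
      by (rule ennreal_plus[symmetric]) (use LKN_nn x1 in auto)
    have e4: "LKN * (\<Delta> s + real N * E * r) + LKN * norm (u - w) * real N
       = LKN * (\<Delta> s + real N * E * r + real N * norm (u - w))" by (simp add: algebra_simps)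
    show ?thesis unfolding e1 e2 e3 e4 ..
  qed
  finally have h: "norm (\<integral>y. F y \<partial>b) \<le> LKN * (\<Delta> s + real N * E * r + real N * norm (u - w))"
    using LKN_nn Delta_nn E_ge1 r by (subst (asm) ennreal_le_iff) auto
  have "vel K vd (\<mu> s) u - vel K vd (\<nu> s) w = (vd u - vd w) - (\<integral>y. F y \<partial>b)"
    unfolding vel_def diffeq[symmetric] by (simp add: algebra_simps)
  then have "norm (vel K vd (\<mu> s) u - vel K vd (\<nu> s) w) \<le> norm (vd u - vd w) + norm (\<integral>y. F y \<partial>b)"
    by (simp only: norm_triangle_ineq4)
  also have "\<dots> \<le> Lv * norm (u - w) + LKN * (\<Delta> s + real N * E * r + real N * norm (u - w))"
    using vdlip h by (rule add_mono)
  finally show ?thesis .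
qed

lemma Delta_cont: "continuous_on {0..T} \<Delta>"
  unfolding \<Delta>_def by (intro continuous_intros g_cont g'_cont)

lemma Delta_bound: assumes t: "t \<in> {0..T}"
  shows "\<Delta> t \<le> (real N * LK * E * r * T) * E"
proof -
  define \<delta> where "\<delta> j s = norm (\<gamma> s (X j) - \<gamma>' s (X j))" for j s
  define h where "h j \<sigma> = Lv * \<delta> j \<sigma> + LKN * (\<Delta> \<sigma> + real N * E * r + real N * \<delta> j \<sigma>)" for j \<sigma>
  have dcont: "continuous_on {0..T} (\<delta> j)" for j
    unfolding \<delta>_def by (intro continuous_intros g_cont g'_cont)
  have hcont: "continuous_on {0..T} (h j)" for j
    unfolding h_def by (intro continuous_intros dcont Delta_cont)
  have main: "\<Delta> s \<le> real N * LK * E * r * T + L0 * integral {0..s} \<Delta>" if s: "s \<in> {0..T}" for s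
  proof -
    have sub: "{0..s} \<subseteq> {0..T}" using s by auto
    have hint: "h j integrable_on {0..s}" for j
      by (intro integrable_continuous_real continuous_on_subset[OF hcont sub])
    have dj: "\<delta> j s \<le> integral {0..s} (h j)" for j
    proof -
      define G where "G \<sigma> = vel K vd (\<mu> \<sigma>) (\<gamma> \<sigma> (X j)) - vel K vd (\<nu> \<sigma>) (\<gamma>' \<sigma> (X j))" for \<sigma>
      have hG: "(G has_integral ((\<gamma> s (X j) - X j) - (\<gamma>' s (X j) - X j))) {0..s}"
        unfolding G_def by (intro has_integral_diff gint g'int s)
      have "\<delta> j s = norm (integral {0..s} G)"
        unfolding \<delta>_def using integral_unique[OF hG] by simp
      also have "\<dots> \<le> integral {0..s} (h j)"
      proof (rule integral_norm_bound_integral)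
        show "G integrable_on {0..s}" using hG by blast
        show "h j integrable_on {0..s}" by (rule hint)
        fix \<sigma> assume "\<sigma> \<in> {0..s}"
        then have \<sigma>T: "\<sigma> \<in> {0..T}" using sub by auto
        show "norm (G \<sigma>) \<le> h j \<sigma>"
          unfolding G_def h_def \<delta>_def by (rule vel_diff[OF \<sigma>T])
      qed
      finally show ?thesis .
    qed
    have "\<Delta> s = (\<Sum>j<N. \<delta> j s)" unfolding \<Delta>_def \<delta>_def ..
    also have "\<dots> \<le> (\<Sum>j<N. integral {0..s} (h j))" by (intro sum_mono dj)
    also have "\<dots> = integral {0..s} (\<lambda>\<sigma>. \<Sum>j<N. h j \<sigma>)"
      by (rule integral_sum[symmetric]) (auto intro: hint)
    also have "\<dots> \<le> integral {0..s} (\<lambda>\<sigma>. L0 * \<Delta> \<sigma> + real N * LK * E * r)"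
    proof (rule integral_le)
      show "(\<lambda>\<sigma>. \<Sum>j<N. h j \<sigma>) integrable_on {0..s}" by (intro integrable_sum hint) simp
      show "(\<lambda>\<sigma>. L0 * \<Delta> \<sigma> + real N * LK * E * r) integrable_on {0..s}"
        by (intro integrable_continuous_real continuous_intros continuous_on_subset[OF Delta_cont sub])
      fix \<sigma> assume "\<sigma> \<in> {0..s}"
      have sumeq: "(\<Sum>j<N. h j \<sigma>) = Lv * \<Delta> \<sigma> + real N * LKN * (\<Delta> \<sigma> + real N * E * r) + real N * LKN * \<Delta> \<sigma>"
        unfolding h_def \<Delta>_def \<delta>_def
        by (simp add: sum.distrib sum_distrib_left[symmetric] algebra_simps)
      have d0: "\<Delta> \<sigma> \<ge> 0" by (rule Delta_nn)
      have ner: "real N * E * r \<ge> 0" using E_ge1 r by simp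
      have "real N * LKN * (\<Delta> \<sigma> + real N * E * r) \<le> LK * (\<Delta> \<sigma> + real N * E * r)"
        using NLK d0 ner by (intro mult_right_mono) auto
      moreover have "real N * LKN * \<Delta> \<sigma> \<le> LK * \<Delta> \<sigma>"
        using NLK d0 by (intro mult_right_mono) auto
      ultimately show "(\<Sum>j<N. h j \<sigma>) \<le> L0 * \<Delta> \<sigma> + real N * LK * E * r"
        unfolding sumeq L0_def by (simp add: algebra_simps)
    qed
    also have "\<dots> = L0 * integral {0..s} \<Delta> + real N * LK * E * r * s"
    proof -
      have "integral {0..s} (\<lambda>\<sigma>. L0 * \<Delta> \<sigma> + real N * LK * E * r)
          = integral {0..s} (\<lambda>\<sigma>. L0 * \<Delta> \<sigma>) + integral {0..s} (\<lambda>\<sigma>. real N * LK * E * r)"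
        by (intro integral_add integrable_continuous_real continuous_intros continuous_on_subset[OF Delta_cont sub])
      then show ?thesis using s by simp
    qed
    also have "\<dots> \<le> L0 * integral {0..s} \<Delta> + real N * LK * E * r * T"
      using s E_ge1 r LK_nn by (intro add_left_mono mult_left_mono) auto
    finally show ?thesis by simp
  qed
  have "\<Delta> t \<le> (real N * LK * E * r * T) * exp (L0 * t)"
    by (rule gronwall[OF Delta_cont L0_nn main t])
  also have "\<dots> \<le> (real N * LK * E * r * T) * E"
    using E_bound[OF t] E_ge1 r LK_nn T by (intro mult_left_mono) auto
  finally show ?thesis .
qed

lemma final_bound: assumes t: "t \<in> {0..T}"
  shows "W1 (\<mu> t) (\<nu> t) \<le> ennreal (real N * r * (LK * T * E * E + E))"
proof -
  have "W1 (\<mu> t) (\<nu> t) \<le> ennreal (\<Delta> t + real N * E * r)"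
    using W1_cost[OF t] cost_bound[OF t] by (rule order_trans)
  also have "\<dots> \<le> ennreal (real N * r * (LK * T * E * E + E))"
    using Delta_bound[OF t] by (intro ennreal_leI) (simp add: algebra_simps)
  finally show ?thesis .
qed

end

lemma KN_props:
  fixes Kc :: "'a::euclidean_space \<Rightarrow> 'a"
  assumes LK: "LK-lipschitz_on UNIV Kc" and N: "N \<ge> 1" and ab: "\<alpha> + \<beta> \<ge> 1"
  shows "(real N powr (-\<alpha>) * (LK * (1 / real N powr \<beta>)))-lipschitz_on UNIV (KN Kc \<alpha> \<beta> N)"
    and "real N * (real N powr (-\<alpha>) * (LK * (1 / real N powr \<beta>))) \<le> LK"
proof -
  have LK0: "LK \<ge> 0" using lipschitz_on_nonneg[OF LK] .
  have Np: "real N > 0" using N by simp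
  define c where "c = real N powr (-\<alpha>)"
  define d where "d = 1 / real N powr \<beta>"
  have c0: "c \<ge> 0" and d0: "d > 0" unfolding c_def d_def using Np by auto
  show "(real N powr (-\<alpha>) * (LK * (1 / real N powr \<beta>)))-lipschitz_on UNIV (KN Kc \<alpha> \<beta> N)"
  proof (rule lipschitz_onI)
    show "0 \<le> real N powr (-\<alpha>) * (LK * (1 / real N powr \<beta>))" using LK0 Np by simp
    fix x y :: 'a
    have ee: "KN Kc \<alpha> \<beta> N x - KN Kc \<alpha> \<beta> N y = c *\<^sub>R (Kc (d *\<^sub>R x) - Kc (d *\<^sub>R y))"
      unfolding KN_def c_def d_def by (simp add: scaleR_diff_right)
    have "dist (KN Kc \<alpha> \<beta> N x) (KN Kc \<alpha> \<beta> N y) = c * norm (Kc (d *\<^sub>R x) - Kc (d *\<^sub>R y))"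
      unfolding dist_norm ee using c0 by simp
    also have "\<dots> \<le> c * (LK * norm (d *\<^sub>R x - d *\<^sub>R y))"
      using lipschitz_on_normD[OF LK] c0 by (intro mult_left_mono) auto
    also have "norm (d *\<^sub>R x - d *\<^sub>R y) = d * dist x y"
    proof -
      have "d *\<^sub>R x - d *\<^sub>R y = d *\<^sub>R (x - y)" by (simp add: scaleR_diff_right)
      then show ?thesis using d0 by (simp add: dist_norm)
    qed
    finally show "dist (KN Kc \<alpha> \<beta> N x) (KN Kc \<alpha> \<beta> N y) \<le> real N powr (-\<alpha>) * (LK * (1 / real N powr \<beta>)) * dist x y"
      unfolding c_def d_def by (simp add: algebra_simps)
  qed
  have "real N * (real N powr (-\<alpha>) * (1 / real N powr \<beta>)) = real N powr (1 + (-\<alpha>) + (-\<beta>))"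
    by (simp only: powr_add powr_minus_divide) (simp add: Np powr_one)
  also have "\<dots> \<le> real N powr 0"
    using ab N by (intro powr_mono) auto
  finally have "real N * (real N powr (-\<alpha>) * (1 / real N powr \<beta>)) \<le> 1" using Np by simp
  then have "real N * (real N powr (-\<alpha>) * (1 / real N powr \<beta>)) * LK \<le> 1 * LK"
    using LK0 by (intro mult_right_mono) auto
  then show "real N * (real N powr (-\<alpha>) * (LK * (1 / real N powr \<beta>))) \<le> LK"
    by (simp add: algebra_simps)
qed

lemma Kc_bounded:
  fixes Kc :: "'a::euclidean_space \<Rightarrow> 'a"
  assumes LK: "LK-lipschitz_on UNIV Kc" and supp: "closure {z. Kc z \<noteq> 0} \<subseteq> ball 0 R"
  obtains B where "B \<ge> 0" "\<And>z. norm (Kc z) \<le> B"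
proof -
  have "continuous_on (cball 0 R) Kc"
    using continuous_on_subset[OF lipschitz_on_continuous_on[OF LK]] by simp
  then have comp: "compact (Kc ` cball 0 R)" by (intro compact_continuous_image) simp_all
  obtain B where B0: "\<forall>y\<in>Kc ` cball 0 R. norm y \<le> B"
    using compact_imp_bounded[OF comp, unfolded bounded_iff] by blast
  have B: "norm (Kc z) \<le> B" if "z \<in> cball 0 R" for z
    using B0 that by blast
  have "norm (Kc z) \<le> max B 0" for z
  proof (cases "z \<in> cball 0 R")
    case True then have "norm (Kc z) \<le> B" by (rule B)
    then show ?thesis by linarith
  next
    case False
    then have "z \<notin> ball 0 R" by simp
    then have "z \<notin> closure {z. Kc z \<noteq> 0}" using supp by blast
    then have "z \<notin> {z. Kc z \<noteq> 0}" using closure_subset[of "{z. Kc z \<noteq> 0}"] by blast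
    then have "Kc z = 0" by simp
    then show ?thesis by simp
  qed
  then show ?thesis using that[of "max B 0"] by simp
qed

theorem mainTheorem9:
  fixes vd Kc :: "'a::euclidean_space \<Rightarrow> 'a"
    and T R \<alpha> \<beta> :: real
    and X :: "nat \<Rightarrow> nat \<Rightarrow> 'a"
    and f :: "'a \<Rightarrow> real"
    and r :: "nat \<Rightarrow> real"
    and \<epsilon> \<rho> :: "nat \<Rightarrow> real \<Rightarrow> 'a measure"
  assumes T: "T > 0"
    and vd_lip: "\<exists>L. L-lipschitz_on UNIV vd"
    and K_lip: "\<exists>L. L-lipschitz_on UNIV Kc"
    and K_supp: "closure {z. Kc z \<noteq> 0} \<subseteq> ball 0 R"
    and ab: "\<alpha> + \<beta> \<ge> 1"
    and X_dist: "\<And>N. N \<ge> 1 \<Longrightarrow> inj_on (X N) {..<N}"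
    and f_nonneg: "\<And>x. f x \<ge> 0"
    and f_supp: "\<And>x. x \<notin> cball 0 1 \<Longrightarrow> f x = 0"
    and f_meas: "f \<in> borel_measurable borel"
    and f_int: "(\<integral>\<^sup>+ x\<in>ball 0 1. ennreal (f x) \<partial>lborel) = 1"
    and r_pos: "\<And>N. N \<ge> 1 \<Longrightarrow> r N > 0"
    and r_sep: "\<And>N i j. N \<ge> 1 \<Longrightarrow> i < N \<Longrightarrow> j < N \<Longrightarrow> i \<noteq> j \<Longrightarrow>
                  r N < dist (X N j) (X N i) / 2"
    and eps_sol: "\<And>N. N \<ge> 1 \<Longrightarrow>
        is_solution (KN Kc \<alpha> \<beta> N) vd T (real N) (empirical N (X N)) (\<epsilon> N)"
    and rho_sol: "\<And>N. N \<ge> 1 \<Longrightarrow>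
        is_solution (KN Kc \<alpha> \<beta> N) vd T (real N) (smoothed N (X N) f (r N)) (\<rho> N)"
    and r_small: "r \<in> o(\<lambda>N. inverse (real N))"
  shows "\<forall>t\<in>{0<..T}. (\<lambda>N. W1 (\<epsilon> N t) (\<rho> N t)) \<longlonglongrightarrow> 0"
proof
  fix t assume t0: "t \<in> {0<..T}"
  then have t: "t \<in> {0..T}" by auto
  obtain Lv where Lv: "Lv-lipschitz_on UNIV vd" using vd_lip by blast
  obtain LK where LK: "LK-lipschitz_on UNIV Kc" using K_lip by blast
  obtain BK where BK: "BK \<ge> 0" "\<And>z. norm (Kc z) \<le> BK" using Kc_bounded[OF LK K_supp] by blast
  define E where "E = exp ((Lv + 2 * LK) * T)"
  define Mc where "Mc = LK * T * E * E + E"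
  have bnd: "W1 (\<epsilon> N t) (\<rho> N t) \<le> ennreal (real N * r N * Mc)" if N: "N \<ge> 1" for N
  proof -
    obtain \<gamma> where g1: "\<forall>t\<in>{0..T}. \<gamma> t \<in> borel_measurable borel \<and> \<epsilon> N t = distr (empirical N (X N)) borel (\<gamma> t)"
      and g2: "\<forall>t\<in>{0..T}. \<forall>x. ((\<lambda>s. vel (KN Kc \<alpha> \<beta> N) vd (\<epsilon> N s) (\<gamma> s x)) has_integral (\<gamma> t x - x)) {0..t}"
      and e1: "\<forall>t\<in>{0..T}. M1 (real N) (\<epsilon> N t)"
      using eps_sol[OF N] unfolding is_solution_def by blast
    obtain \<gamma>' where h1: "\<forall>t\<in>{0..T}. \<gamma>' t \<in> borel_measurable borel \<and> \<rho> N t = distr (smoothed N (X N) f (r N)) borel (\<gamma>' t)"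
      and h2: "\<forall>t\<in>{0..T}. \<forall>x. ((\<lambda>s. vel (KN Kc \<alpha> \<beta> N) vd (\<rho> N s) (\<gamma>' s x)) has_integral (\<gamma>' t x - x)) {0..t}"
      and r1: "\<forall>t\<in>{0..T}. M1 (real N) (\<rho> N t)"
      using rho_sol[OF N] unfolding is_solution_def by blast
    define LKN where "LKN = real N powr (-\<alpha>) * (LK * (1 / real N powr \<beta>))"
    have S: "setting (KN Kc \<alpha> \<beta> N) vd T N (X N) f (r N) (\<epsilon> N) (\<rho> N) \<gamma> \<gamma>' Lv LK LKN (real N powr (-\<alpha>) * BK)"
    proof (unfold_locales)
      show "0 \<le> T" using T by simp
      show "Lv-lipschitz_on UNIV vd" by (rule Lv)
      show "LKN-lipschitz_on UNIV (KN Kc \<alpha> \<beta> N)" unfolding LKN_def by (rule KN_props(1)[OF LK N ab])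
      show "real N * LKN \<le> LK" unfolding LKN_def by (rule KN_props(2)[OF LK N ab])
      show "norm (KN Kc \<alpha> \<beta> N z) \<le> real N powr (-\<alpha>) * BK" for z
        unfolding KN_def using BK by (simp add: mult_left_mono)
      show "1 \<le> N" by (rule N)
      show "0 < r N" by (rule r_pos[OF N])
      show "r N < dist (X N j) (X N i) / 2" if "i < N" "j < N" "i \<noteq> j" for i j
        using r_sep[OF N that] .
      show "0 \<le> f x" for x by (rule f_nonneg)
      show "x \<notin> cball 0 1 \<Longrightarrow> f x = 0" for x by (rule f_supp)
      show "f \<in> borel_measurable borel" by (rule f_meas)
      show "M1 (real N) (\<epsilon> N s)" if "s \<in> {0..T}" for s using e1 that by blast
      show "M1 (real N) (\<rho> N s)" if "s \<in> {0..T}" for s using r1 that by blast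
      show "\<gamma> s \<in> borel_measurable borel" if "s \<in> {0..T}" for s using g1 that by blast
      show "\<gamma>' s \<in> borel_measurable borel" if "s \<in> {0..T}" for s using h1 that by blast
      show "\<epsilon> N s = distr (empirical N (X N)) borel (\<gamma> s)" if "s \<in> {0..T}" for s using g1 that by blast
      show "\<rho> N s = distr (smoothed N (X N) f (r N)) borel (\<gamma>' s)" if "s \<in> {0..T}" for s using h1 that by blast
      show "((\<lambda>\<sigma>. vel (KN Kc \<alpha> \<beta> N) vd (\<epsilon> N \<sigma>) (\<gamma> \<sigma> x)) has_integral (\<gamma> s x - x)) {0..s}"
        if "s \<in> {0..T}" for s x using g2 that by blast
      show "((\<lambda>\<sigma>. vel (KN Kc \<alpha> \<beta> N) vd (\<rho> N \<sigma>) (\<gamma>' \<sigma> x)) has_integral (\<gamma>' s x - x)) {0..s}"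
        if "s \<in> {0..T}" for s x using h2 that by blast
    qed
    have "W1 (\<epsilon> N t) (\<rho> N t) \<le> ennreal (real N * r N * (LK * T * setting.E T Lv LK * setting.E T Lv LK + setting.E T Lv LK))"
      by (rule setting.final_bound[OF S t])
    moreover have "setting.E T Lv LK = E"
      unfolding setting.E_def[OF S] setting.L0_def[OF S] E_def ..
    ultimately show ?thesis unfolding Mc_def by simp
  qed
  have lim: "(\<lambda>N. r N / inverse (real N)) \<longlonglongrightarrow> 0"
    using smalloD_tendsto[OF r_small] .
  have eqf: "(\<lambda>N. r N / inverse (real N)) = (\<lambda>N. real N * r N)"
    by (rule ext) (simp add: divide_inverse mult.commute)
  have "(\<lambda>N. real N * r N * Mc) \<longlonglongrightarrow> 0 * Mc"
    using lim unfolding eqf by (intro tendsto_mult tendsto_const)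
  then have "(\<lambda>N. ennreal (real N * r N * Mc)) \<longlonglongrightarrow> ennreal 0"
    by (intro tendsto_ennrealI) simp
  then have up: "(\<lambda>N. ennreal (real N * r N * Mc)) \<longlonglongrightarrow> 0" by simp
  show "(\<lambda>N. W1 (\<epsilon> N t) (\<rho> N t)) \<longlonglongrightarrow> 0"
  proof (rule tendsto_sandwich[OF _ _ tendsto_const up])
    show "\<forall>\<^sub>F n in sequentially. 0 \<le> W1 (\<epsilon> n t) (\<rho> n t)" by simp
    show "\<forall>\<^sub>F n in sequentially. W1 (\<epsilon> n t) (\<rho> n t) \<le> ennreal (real n * r n * Mc)"
      by (rule eventually_sequentiallyI[of 1]) (rule bnd)
  qed
qed


end
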